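(* For $j=1,2$, let $G_j$ be a 2-step stratified Lie group with Lie algebra $\mathfrak{g}_j=\mathfrak{v}_j\oplus\mathfrak{z}_j$ and let $L_j$ be a sublaplacian on $G_j$ such that $(G_j,L_j)$ satisfies Assumption (A). Suppose $\dim\mathfrak{z}_1=\dim\mathfrak{z}_2$, and let $\phi:\mathfrak{z}_1\to\mathfrak{z}_2$ be a linear isomorphism. Let $G$ be the quotient of $G_1\times G_2$ obtained by identifying the centers via $\phi$, i.e. the connected simply connected group with Lie algebra $\mathfrak{v}_1\times\mathfrak{v}_2\times\mathfrak{z}_2$ and bracket $[(v_1,v_2,z),(v_1',v_2',z')]=(0,0,\phi([v_1,v_1'])+[v_2,v_2'])$, and let $L=L_1^\sharp+L_2^\sharp$, where $L_j^\sharp$ is the pushforward of $L_j$ to $G$. Then $(G,L)$ satisfies Assumption (A).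
   Context: For a 2-step group with Lie algebra $\mathfrak{g}=\mathfrak{v}\oplus\mathfrak{z}$ ($\mathfrak{z}$ the center, $\mathfrak{v}$ a complement), a sublaplacian $L=-\sum_jX_j^2$ ($\{X_j\}$ a basis of $\mathfrak{v}$) determines the inner product $\langle\cdot,\cdot\rangle$ on $\mathfrak{v}$ for which $\{X_j\}$ is orthonormal. For $\eta\in\mathfrak{z}^*$, $J_\eta$ is the endomorphism of $\mathfrak{v}$ with $\eta([x,x'])=\langle J_\eta x,x'\rangle$. Assumption (A): there exist integers $r_1,\dots,r_k>0$ and an orthogonal decomposition $\mathfrak{v}=\mathfrak{v}_1\oplus\dots\oplus\mathfrak{v}_k$ with orthogonal projections $P_j$ such that for all $\eta\in\mathfrak{z}^*\setminus\{0\}$ and all $j$, $J_\eta P_j=P_jJ_\eta$ and $J_\eta^2P_j$ has rank $2r_j$ and a unique nonzero eigenvalue. The pushforward $L_j^\sharp$ is the left-invariant operator $-\sum_l (X_{l}^{(j)})^2$ on $G$ obtained by regarding an orthonormal basis $\{X^{(j)}_l\}$ of $\mathfrak{v}_j$ as elements of $\mathfrak{v}_1\times\mathfrak{v}_2\times\mathfrak{z}_2$. *)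

theory Defs
  imports "HOL-Analysis.Analysis"
begin

text \<open>A 2-step stratified Lie algebra g = v + z (z the center, [v,v] = z) is encoded by its
  bracket restricted to v, a bilinear skew map v x v -> z. The inner product on v is the one
  of the euclidean_space type 'v, i.e. the one making the basis defining the sublaplacian
  orthonormal.\<close>

definition strat2 :: "('v::euclidean_space \<Rightarrow> 'v \<Rightarrow> 'z::euclidean_space) \<Rightarrow> bool" where
  "strat2 \<beta> \<longleftrightarrow> bilinear \<beta> \<and> (\<forall>x y. \<beta> x y = - \<beta> y x)
     \<and> span (range (\<lambda>(x, y). \<beta> x y)) = UNIV
     \<and> (\<forall>x. (\<forall>y. \<beta> x y = 0) \<longrightarrow> x = 0)"

definition Jmap :: "('v::euclidean_space \<Rightarrow> 'v \<Rightarrow> 'z) \<Rightarrow> ('z \<Rightarrow> real) \<Rightarrow> 'v \<Rightarrow> 'v" where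
  "Jmap \<beta> \<eta> = (THE J. linear J \<and> (\<forall>x x'. \<eta> (\<beta> x x') = inner (J x) x'))"

definition assumptionA :: "('v::euclidean_space \<Rightarrow> 'v \<Rightarrow> 'z::euclidean_space) \<Rightarrow> bool" where
  "assumptionA \<beta> \<longleftrightarrow>
    (\<exists>(k::nat) (r::nat \<Rightarrow> nat) (V::nat \<Rightarrow> 'v set) (P::nat \<Rightarrow> 'v \<Rightarrow> 'v).
       (\<forall>j<k. r j > 0)
     \<and> (\<forall>j<k. subspace (V j))
     \<and> (\<forall>i<k. \<forall>j<k. i \<noteq> j \<longrightarrow> (\<forall>x\<in>V i. \<forall>y\<in>V j. inner x y = 0))
     \<and> (\<forall>x. \<exists>u. (\<forall>j<k. u j \<in> V j) \<and> x = (\<Sum>j<k. u j))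
     \<and> (\<forall>j<k. \<forall>x. P j x \<in> V j \<and> (\<forall>y\<in>V j. inner (x - P j x) y = 0))
     \<and> (\<forall>\<eta>::'z \<Rightarrow> real. linear \<eta> \<and> \<eta> \<noteq> (\<lambda>_. 0) \<longrightarrow>
          (\<forall>j<k. Jmap \<beta> \<eta> \<circ> P j = P j \<circ> Jmap \<beta> \<eta>
              \<and> dim (range (Jmap \<beta> \<eta> \<circ> Jmap \<beta> \<eta> \<circ> P j)) = 2 * r j
              \<and> (\<exists>!\<mu>::real. \<mu> \<noteq> 0 \<and>
                   (\<exists>x. x \<noteq> 0 \<and> (Jmap \<beta> \<eta> \<circ> Jmap \<beta> \<eta> \<circ> P j) x = \<mu> *\<^sub>R x)))))"

definition glued_bracket ::
  "('z1 \<Rightarrow> 'z2::real_vector) \<Rightarrow> ('v1 \<Rightarrow> 'v1 \<Rightarrow> 'z1) \<Rightarrow> ('v2 \<Rightarrow> 'v2 \<Rightarrow> 'z2)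
    \<Rightarrow> 'v1 \<times> 'v2 \<Rightarrow> 'v1 \<times> 'v2 \<Rightarrow> 'z2" where
  "glued_bracket \<phi> \<beta>1 \<beta>2 x y = \<phi> (\<beta>1 (fst x) (fst y)) + \<beta>2 (snd x) (snd y)"

end

theory Submission
  imports Defs
begin

lemma Jmap_eqI:
  assumes "linear J" "\<forall>x x'. \<eta> (\<beta> x x') = inner (J x) x'"
  shows "Jmap \<beta> \<eta> = J"
  unfolding Jmap_def
proof (rule the_equality)
  show "linear J \<and> (\<forall>x x'. \<eta> (\<beta> x x') = inner (J x) x')" using assms by blast
next
  fix J' assume h: "linear J' \<and> (\<forall>x x'. \<eta> (\<beta> x x') = inner (J' x) x')"
  show "J' = J"
  proof
    fix x
    have "inner (J' x - J x) y = 0" for y using h assms(2) by (simp add: inner_diff_left)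
    then have "inner (J' x - J x) (J' x - J x) = 0" by blast
    then show "J' x = J x" by simp
  qed
qed

lemma Jmap_works:
  fixes \<beta> :: "'v::euclidean_space \<Rightarrow> 'v \<Rightarrow> 'z::euclidean_space"
  assumes b: "bilinear \<beta>" and l: "linear \<eta>"
  shows "linear (Jmap \<beta> \<eta>) \<and> (\<forall>x x'. \<eta> (\<beta> x x') = inner (Jmap \<beta> \<eta> x) x')"
proof -
  define J where "J x = (\<Sum>b\<in>Basis. \<eta> (\<beta> x b) *\<^sub>R b)" for x
  have lin: "linear J"
    by (rule linearI) (simp_all add: J_def bilinear_ladd[OF b] bilinear_lmul[OF b]
        linear_add[OF l] linear_scale[OF l] scaleR_add_left sum.distrib scaleR_sum_right)
  have pr: "\<eta> (\<beta> x x') = inner (J x) x'" for x x'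
  proof -
    have "\<beta> x x' = \<beta> x (\<Sum>b\<in>Basis. (x' \<bullet> b) *\<^sub>R b)" by (simp add: euclidean_representation)
    also have "\<dots> = (\<Sum>b\<in>Basis. (x' \<bullet> b) *\<^sub>R \<beta> x b)"
      using b unfolding bilinear_def by (simp add: linear_sum linear_scale)
    finally have "\<eta> (\<beta> x x') = (\<Sum>b\<in>Basis. (x' \<bullet> b) * \<eta> (\<beta> x b))"
      by (simp add: linear_sum[OF l] linear_scale[OF l])
    also have "\<dots> = inner (J x) x'"
      by (simp add: J_def inner_sum_right inner_commute mult.commute)
    finally show ?thesis .
  qed
  have "Jmap \<beta> \<eta> = J" by (rule Jmap_eqI[OF lin]) (simp add: pr)
  then show ?thesis using lin pr by simp
qed

lemma sum_split_add:
  fixes f :: "nat \<Rightarrow> 'a::comm_monoid_add"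
  shows "(\<Sum>j<k1+k2. f j) = (\<Sum>j<k1. f j) + (\<Sum>j<k2. f (k1+j))"
  by (induct k2) (simp_all add: add.assoc)

theorem proposition6p2:
  fixes \<beta>1 :: "'v1::euclidean_space \<Rightarrow> 'v1 \<Rightarrow> 'z1::euclidean_space"
    and \<beta>2 :: "'v2::euclidean_space \<Rightarrow> 'v2 \<Rightarrow> 'z2::euclidean_space"
    and \<phi> :: "'z1 \<Rightarrow> 'z2"
  assumes "strat2 \<beta>1" and "strat2 \<beta>2"
    and "assumptionA \<beta>1" and "assumptionA \<beta>2"
    and "DIM('z1) = DIM('z2)"
    and "linear \<phi>" and "bij \<phi>"
  shows "assumptionA (glued_bracket \<phi> \<beta>1 \<beta>2)"
proof -
  have b1: "bilinear \<beta>1" and b2: "bilinear \<beta>2" using assms(1,2) by (auto simp: strat2_def)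
  obtain k1 :: nat and r1 :: "nat \<Rightarrow> nat" and V1 :: "nat \<Rightarrow> 'v1 set" and P1 :: "nat \<Rightarrow> 'v1 \<Rightarrow> 'v1" where
    r1: "\<forall>j<k1. r1 j > 0" and V1s: "\<forall>j<k1. subspace (V1 j)"
    and V1o: "\<forall>i<k1. \<forall>j<k1. i \<noteq> j \<longrightarrow> (\<forall>x\<in>V1 i. \<forall>y\<in>V1 j. inner x y = 0)"
    and V1d: "\<forall>x. \<exists>u. (\<forall>j<k1. u j \<in> V1 j) \<and> x = (\<Sum>j<k1. u j)"
    and P1p: "\<forall>j<k1. \<forall>x. P1 j x \<in> V1 j \<and> (\<forall>y\<in>V1 j. inner (x - P1 j x) y = 0)"
    and A1: "\<forall>\<eta>::'z1 \<Rightarrow> real. linear \<eta> \<and> \<eta> \<noteq> (\<lambda>_. 0) \<longrightarrow>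
          (\<forall>j<k1. Jmap \<beta>1 \<eta> \<circ> P1 j = P1 j \<circ> Jmap \<beta>1 \<eta>
              \<and> dim (range (Jmap \<beta>1 \<eta> \<circ> Jmap \<beta>1 \<eta> \<circ> P1 j)) = 2 * r1 j
              \<and> (\<exists>!\<mu>::real. \<mu> \<noteq> 0 \<and>
                   (\<exists>x. x \<noteq> 0 \<and> (Jmap \<beta>1 \<eta> \<circ> Jmap \<beta>1 \<eta> \<circ> P1 j) x = \<mu> *\<^sub>R x)))"
    using assms(3) unfolding assumptionA_def by (elim exE conjE) (rule that; assumption)
  obtain k2 :: nat and r2 :: "nat \<Rightarrow> nat" and V2 :: "nat \<Rightarrow> 'v2 set" and P2 :: "nat \<Rightarrow> 'v2 \<Rightarrow> 'v2" where
    r2: "\<forall>j<k2. r2 j > 0" and V2s: "\<forall>j<k2. subspace (V2 j)"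
    and V2o: "\<forall>i<k2. \<forall>j<k2. i \<noteq> j \<longrightarrow> (\<forall>x\<in>V2 i. \<forall>y\<in>V2 j. inner x y = 0)"
    and V2d: "\<forall>x. \<exists>u. (\<forall>j<k2. u j \<in> V2 j) \<and> x = (\<Sum>j<k2. u j)"
    and P2p: "\<forall>j<k2. \<forall>x. P2 j x \<in> V2 j \<and> (\<forall>y\<in>V2 j. inner (x - P2 j x) y = 0)"
    and A2: "\<forall>\<eta>::'z2 \<Rightarrow> real. linear \<eta> \<and> \<eta> \<noteq> (\<lambda>_. 0) \<longrightarrow>
          (\<forall>j<k2. Jmap \<beta>2 \<eta> \<circ> P2 j = P2 j \<circ> Jmap \<beta>2 \<eta>
              \<and> dim (range (Jmap \<beta>2 \<eta> \<circ> Jmap \<beta>2 \<eta> \<circ> P2 j)) = 2 * r2 j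
              \<and> (\<exists>!\<mu>::real. \<mu> \<noteq> 0 \<and>
                   (\<exists>x. x \<noteq> 0 \<and> (Jmap \<beta>2 \<eta> \<circ> Jmap \<beta>2 \<eta> \<circ> P2 j) x = \<mu> *\<^sub>R x)))"
    using assms(4) unfolding assumptionA_def by (elim exE conjE) (rule that; assumption)
  define k where "k = k1 + k2"
  define r where "r j = (if j < k1 then r1 j else r2 (j - k1))" for j
  define V :: "nat \<Rightarrow> ('v1 \<times> 'v2) set"
    where "V j = (if j < k1 then V1 j \<times> {0} else {0} \<times> V2 (j - k1))" for j
  define P :: "nat \<Rightarrow> 'v1 \<times> 'v2 \<Rightarrow> 'v1 \<times> 'v2"
    where "P j x = (if j < k1 then (P1 j (fst x), 0) else (0, P2 (j - k1) (snd x)))" for j x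
  have c1: "\<forall>j<k. r j > 0" using r1 r2 by (auto simp: r_def k_def)
  have c2: "\<forall>j<k. subspace (V j)"
    using V1s V2s by (auto simp: V_def k_def intro!: subspace_Times subspace_single_0)
  have c3: "\<forall>i<k. \<forall>j<k. i \<noteq> j \<longrightarrow> (\<forall>x\<in>V i. \<forall>y\<in>V j. inner x y = 0)"
  proof (intro allI impI ballI)
    fix i j x y assume "i < k" "j < k" "i \<noteq> j" "x \<in> V i" "y \<in> V j"
    then show "inner x y = 0"
      using V1o[rule_format, of i j] V2o[rule_format, of "i - k1" "j - k1"]
      by (auto simp: V_def k_def split: if_splits)
  qed
  have c4: "\<forall>x. \<exists>u. (\<forall>j<k. u j \<in> V j) \<and> x = (\<Sum>j<k. u j)"
  proof
    fix x :: "'v1 \<times> 'v2"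
    obtain u1 where u1: "\<forall>j<k1. u1 j \<in> V1 j" "fst x = (\<Sum>j<k1. u1 j)" using V1d by blast
    obtain u2 where u2: "\<forall>j<k2. u2 j \<in> V2 j" "snd x = (\<Sum>j<k2. u2 j)" using V2d by blast
    define u where "u j = (if j < k1 then (u1 j, 0) else (0, u2 (j - k1)))" for j
    have "\<forall>j<k. u j \<in> V j" using u1 u2 by (auto simp: u_def V_def k_def)
    moreover have "(\<Sum>j<k. u j) = x"
    proof (rule prod_eqI)
      show "fst (\<Sum>j<k. u j) = fst x" unfolding k_def sum_split_add
        by (simp add: u_def u1 fst_sum)
      show "snd (\<Sum>j<k. u j) = snd x" unfolding k_def sum_split_add
        by (simp add: u_def u2 snd_sum)
    qed
    ultimately show "\<exists>u. (\<forall>j<k. u j \<in> V j) \<and> x = (\<Sum>j<k. u j)" by metis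
  qed
  have c5: "\<forall>j<k. \<forall>x. P j x \<in> V j \<and> (\<forall>y\<in>V j. inner (x - P j x) y = 0)"
  proof (intro allI impI)
    fix j x assume j: "j < k"
    show "P j x \<in> V j \<and> (\<forall>y\<in>V j. inner (x - P j x) y = 0)"
    proof (cases "j < k1")
      case True then show ?thesis using P1p[rule_format, of j "fst x"]
        by (auto simp: P_def V_def inner_Pair_0 inner_diff_left inner_Pair)
    next
      case False then have "j - k1 < k2" using j by (simp add: k_def)
      then show ?thesis using False P2p[rule_format, of "j - k1" "snd x"]
        by (auto simp: P_def V_def inner_Pair_0 inner_diff_left inner_Pair)
    qed
  qed
  have c6: "\<forall>\<eta>::'z2 \<Rightarrow> real. linear \<eta> \<and> \<eta> \<noteq> (\<lambda>_. 0) \<longrightarrow>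
          (\<forall>j<k. Jmap (glued_bracket \<phi> \<beta>1 \<beta>2) \<eta> \<circ> P j = P j \<circ> Jmap (glued_bracket \<phi> \<beta>1 \<beta>2) \<eta>
              \<and> dim (range (Jmap (glued_bracket \<phi> \<beta>1 \<beta>2) \<eta> \<circ> Jmap (glued_bracket \<phi> \<beta>1 \<beta>2) \<eta> \<circ> P j)) = 2 * r j
              \<and> (\<exists>!\<mu>::real. \<mu> \<noteq> 0 \<and>
                   (\<exists>x. x \<noteq> 0 \<and> (Jmap (glued_bracket \<phi> \<beta>1 \<beta>2) \<eta> \<circ> Jmap (glued_bracket \<phi> \<beta>1 \<beta>2) \<eta> \<circ> P j) x = \<mu> *\<^sub>R x)))"
  proof (intro allI impI)
    fix \<eta> :: "'z2 \<Rightarrow> real" and j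
    assume h: "linear \<eta> \<and> \<eta> \<noteq> (\<lambda>_. 0)" and j: "j < k"
    have l1: "linear (\<eta> \<circ> \<phi>)" using h assms(6) by (simp add: linear_compose)
    have n1: "\<eta> \<circ> \<phi> \<noteq> (\<lambda>_. 0)"
    proof
      assume "\<eta> \<circ> \<phi> = (\<lambda>_. 0)"
      then have "\<eta> y = 0" for y using assms(7)
        by (metis bij_pointE comp_apply)
      then show False using h by auto
    qed
    define J1 where "J1 = Jmap \<beta>1 (\<eta> \<circ> \<phi>)"
    define J2 where "J2 = Jmap \<beta>2 \<eta>"
    have J1w: "linear J1 \<and> (\<forall>x x'. (\<eta> \<circ> \<phi>) (\<beta>1 x x') = inner (J1 x) x')"
      unfolding J1_def by (rule Jmap_works[OF b1 l1])
    have J2w: "linear J2 \<and> (\<forall>x x'. \<eta> (\<beta>2 x x') = inner (J2 x) x')"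
      unfolding J2_def using Jmap_works[OF b2] h by blast
    have J10: "J1 0 = 0" using J1w linear_0 by blast
    have J20: "J2 0 = 0" using J2w linear_0 by blast
    have JJ: "Jmap (glued_bracket \<phi> \<beta>1 \<beta>2) \<eta> = (\<lambda>x. (J1 (fst x), J2 (snd x)))"
    proof (rule Jmap_eqI)
      show "linear (\<lambda>x. (J1 (fst x), J2 (snd x)))"
        using J1w J2w by (intro linearI) (auto simp: linear_add linear_scale)
      show "\<forall>x x'. \<eta> (glued_bracket \<phi> \<beta>1 \<beta>2 x x') = inner (J1 (fst x), J2 (snd x)) x'"
      proof (intro allI)
        fix x x' :: "'v1 \<times> 'v2"
        show "\<eta> (glued_bracket \<phi> \<beta>1 \<beta>2 x x') = inner (J1 (fst x), J2 (snd x)) x'"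
          using J1w J2w h
          by (cases x') (simp add: glued_bracket_def linear_add)
      qed
    qed
    show "Jmap (glued_bracket \<phi> \<beta>1 \<beta>2) \<eta> \<circ> P j = P j \<circ> Jmap (glued_bracket \<phi> \<beta>1 \<beta>2) \<eta>
              \<and> dim (range (Jmap (glued_bracket \<phi> \<beta>1 \<beta>2) \<eta> \<circ> Jmap (glued_bracket \<phi> \<beta>1 \<beta>2) \<eta> \<circ> P j)) = 2 * r j
              \<and> (\<exists>!\<mu>::real. \<mu> \<noteq> 0 \<and>
                   (\<exists>x. x \<noteq> 0 \<and> (Jmap (glued_bracket \<phi> \<beta>1 \<beta>2) \<eta> \<circ> Jmap (glued_bracket \<phi> \<beta>1 \<beta>2) \<eta> \<circ> P j) x = \<mu> *\<^sub>R x))"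
    proof (cases "j < k1")
      case True
      have A: "J1 \<circ> P1 j = P1 j \<circ> J1"
          "dim (range (J1 \<circ> J1 \<circ> P1 j)) = 2 * r1 j"
          "\<exists>!\<mu>::real. \<mu> \<noteq> 0 \<and> (\<exists>x. x \<noteq> 0 \<and> (J1 \<circ> J1 \<circ> P1 j) x = \<mu> *\<^sub>R x)"
        using A1[rule_format, OF conjI[OF l1 n1] True] unfolding J1_def by auto
      have e1: "(\<lambda>x. (J1 (fst x), J2 (snd x))) \<circ> P j = P j \<circ> (\<lambda>x. (J1 (fst x), J2 (snd x)))"
      proof
        fix x show "((\<lambda>x. (J1 (fst x), J2 (snd x))) \<circ> P j) x = (P j \<circ> (\<lambda>x. (J1 (fst x), J2 (snd x)))) x"
          using fun_cong[OF A(1), of "fst x"] True by (simp add: P_def J20)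
      qed
      have rg: "range ((\<lambda>x. (J1 (fst x), J2 (snd x))) \<circ> (\<lambda>x. (J1 (fst x), J2 (snd x))) \<circ> P j)
          = (\<lambda>a. (a, 0::'v2)) ` range (J1 \<circ> J1 \<circ> P1 j)"
        using True by (auto simp: P_def J20 image_iff)
      have "dim ((\<lambda>a. (a, 0::'v2)) ` range (J1 \<circ> J1 \<circ> P1 j)) = dim (range (J1 \<circ> J1 \<circ> P1 j))"
        by (rule dim_image_eq) (auto intro!: linearI simp: inj_on_def)
      then have e2: "dim (range ((\<lambda>x. (J1 (fst x), J2 (snd x))) \<circ> (\<lambda>x. (J1 (fst x), J2 (snd x))) \<circ> P j)) = 2 * r j"
        using rg A(2) True by (simp add: r_def)
      have eq: "(\<mu> \<noteq> 0 \<and> (\<exists>x. x \<noteq> 0 \<and> ((\<lambda>x. (J1 (fst x), J2 (snd x))) \<circ> (\<lambda>x. (J1 (fst x), J2 (snd x))) \<circ> P j) x = \<mu> *\<^sub>R x))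
          \<longleftrightarrow> (\<mu> \<noteq> 0 \<and> (\<exists>x. x \<noteq> 0 \<and> (J1 \<circ> J1 \<circ> P1 j) x = \<mu> *\<^sub>R x))" for \<mu>
      proof
        assume "\<mu> \<noteq> 0 \<and> (\<exists>x. x \<noteq> 0 \<and> ((\<lambda>x. (J1 (fst x), J2 (snd x))) \<circ> (\<lambda>x. (J1 (fst x), J2 (snd x))) \<circ> P j) x = \<mu> *\<^sub>R x)"
        then obtain x where x: "\<mu> \<noteq> 0" "x \<noteq> 0" "((\<lambda>x. (J1 (fst x), J2 (snd x))) \<circ> (\<lambda>x. (J1 (fst x), J2 (snd x))) \<circ> P j) x = \<mu> *\<^sub>R x" by blast
        then have e: "J1 (J1 (P1 j (fst x))) = \<mu> *\<^sub>R fst x" "0 = \<mu> *\<^sub>R snd x"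
          using True by (auto simp: P_def J20 prod_eq_iff)
        have "fst x \<noteq> 0" using x(1,2) e(2) by (auto simp: prod_eq_iff)
        then show "\<mu> \<noteq> 0 \<and> (\<exists>x. x \<noteq> 0 \<and> (J1 \<circ> J1 \<circ> P1 j) x = \<mu> *\<^sub>R x)"
          using x(1) e(1) by auto
      next
        assume "\<mu> \<noteq> 0 \<and> (\<exists>x. x \<noteq> 0 \<and> (J1 \<circ> J1 \<circ> P1 j) x = \<mu> *\<^sub>R x)"
        then obtain a where "\<mu> \<noteq> 0" "a \<noteq> 0" "J1 (J1 (P1 j a)) = \<mu> *\<^sub>R a" by auto
        then show "\<mu> \<noteq> 0 \<and> (\<exists>x. x \<noteq> 0 \<and> ((\<lambda>x. (J1 (fst x), J2 (snd x))) \<circ> (\<lambda>x. (J1 (fst x), J2 (snd x))) \<circ> P j) x = \<mu> *\<^sub>R x)"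
          using True by (intro conjI exI[of _ "(a, 0)"]) (auto simp: P_def J20 zero_prod_def)
      qed
      show ?thesis unfolding JJ using e1 e2 A(3) eq by simp
    next
      case False
      then have jj: "j - k1 < k2" using j by (simp add: k_def)
      have A: "J2 \<circ> P2 (j - k1) = P2 (j - k1) \<circ> J2"
          "dim (range (J2 \<circ> J2 \<circ> P2 (j - k1))) = 2 * r2 (j - k1)"
          "\<exists>!\<mu>::real. \<mu> \<noteq> 0 \<and> (\<exists>x. x \<noteq> 0 \<and> (J2 \<circ> J2 \<circ> P2 (j - k1)) x = \<mu> *\<^sub>R x)"
        using A2[rule_format, OF h jj] unfolding J2_def by auto
      have e1: "(\<lambda>x. (J1 (fst x), J2 (snd x))) \<circ> P j = P j \<circ> (\<lambda>x. (J1 (fst x), J2 (snd x)))"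
      proof
        fix x show "((\<lambda>x. (J1 (fst x), J2 (snd x))) \<circ> P j) x = (P j \<circ> (\<lambda>x. (J1 (fst x), J2 (snd x)))) x"
          using fun_cong[OF A(1), of "snd x"] False by (simp add: P_def J10)
      qed
      have rg: "range ((\<lambda>x. (J1 (fst x), J2 (snd x))) \<circ> (\<lambda>x. (J1 (fst x), J2 (snd x))) \<circ> P j)
          = (\<lambda>a. (0::'v1, a)) ` range (J2 \<circ> J2 \<circ> P2 (j - k1))"
        using False by (auto simp: P_def J10 image_iff)
      have "dim ((\<lambda>a. (0::'v1, a)) ` range (J2 \<circ> J2 \<circ> P2 (j - k1))) = dim (range (J2 \<circ> J2 \<circ> P2 (j - k1)))"
        by (rule dim_image_eq) (auto intro!: linearI simp: inj_on_def)
      then have e2: "dim (range ((\<lambda>x. (J1 (fst x), J2 (snd x))) \<circ> (\<lambda>x. (J1 (fst x), J2 (snd x))) \<circ> P j)) = 2 * r j"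
        using rg A(2) False by (simp add: r_def)
      have eq: "(\<mu> \<noteq> 0 \<and> (\<exists>x. x \<noteq> 0 \<and> ((\<lambda>x. (J1 (fst x), J2 (snd x))) \<circ> (\<lambda>x. (J1 (fst x), J2 (snd x))) \<circ> P j) x = \<mu> *\<^sub>R x))
          \<longleftrightarrow> (\<mu> \<noteq> 0 \<and> (\<exists>x. x \<noteq> 0 \<and> (J2 \<circ> J2 \<circ> P2 (j - k1)) x = \<mu> *\<^sub>R x))" for \<mu>
      proof
        assume "\<mu> \<noteq> 0 \<and> (\<exists>x. x \<noteq> 0 \<and> ((\<lambda>x. (J1 (fst x), J2 (snd x))) \<circ> (\<lambda>x. (J1 (fst x), J2 (snd x))) \<circ> P j) x = \<mu> *\<^sub>R x)"
        then obtain x where x: "\<mu> \<noteq> 0" "x \<noteq> 0" "((\<lambda>x. (J1 (fst x), J2 (snd x))) \<circ> (\<lambda>x. (J1 (fst x), J2 (snd x))) \<circ> P j) x = \<mu> *\<^sub>R x" by blast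
        then have e: "J2 (J2 (P2 (j - k1) (snd x))) = \<mu> *\<^sub>R snd x" "0 = \<mu> *\<^sub>R fst x"
          using False by (auto simp: P_def J10 prod_eq_iff)
        have "snd x \<noteq> 0" using x(1,2) e(2) by (auto simp: prod_eq_iff)
        then show "\<mu> \<noteq> 0 \<and> (\<exists>x. x \<noteq> 0 \<and> (J2 \<circ> J2 \<circ> P2 (j - k1)) x = \<mu> *\<^sub>R x)"
          using x(1) e(1) by auto
      next
        assume "\<mu> \<noteq> 0 \<and> (\<exists>x. x \<noteq> 0 \<and> (J2 \<circ> J2 \<circ> P2 (j - k1)) x = \<mu> *\<^sub>R x)"
        then obtain a where "\<mu> \<noteq> 0" "a \<noteq> 0" "J2 (J2 (P2 (j - k1) a)) = \<mu> *\<^sub>R a" by auto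
        then show "\<mu> \<noteq> 0 \<and> (\<exists>x. x \<noteq> 0 \<and> ((\<lambda>x. (J1 (fst x), J2 (snd x))) \<circ> (\<lambda>x. (J1 (fst x), J2 (snd x))) \<circ> P j) x = \<mu> *\<^sub>R x)"
          using False by (intro conjI exI[of _ "(0, a)"]) (auto simp: P_def J10 zero_prod_def)
      qed
      show ?thesis unfolding JJ using e1 e2 A(3) eq by simp
    qed
  qed
  show ?thesis unfolding assumptionA_def
    by (rule exI[of _ k], rule exI[of _ r], rule exI[of _ V], rule exI[of _ P])
       (use c1 c2 c3 c4 c5 c6 in blast)
qed

end
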